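(* Let $(X,X^+)$ be an ordered Banach space whose cone $X^+$ is normal and has non-empty interior, and let $T\in\mathcal{L}(X)$ be positive. Then the following assertions are equivalent: (i) $\operatorname{r}(T) < 1$. (ii) (Dual small-gain condition) For each $0 \neq x' \in (X')^+$ we have $T'x' \not\ge x'$. (iii) For every interior point $z$ of $X^+$ there is $\eta>0$ such that $Tx \not\ge x - \eta\|x\| z$ for all $x \in X^+\setminus\{0\}$. (iv) There exist an interior point $z$ of $X^+$ and $\eta>0$ such that $Tx \not\ge x - \eta\|x\| z$ for all $x \in X^+\setminus\{0\}$. (v) There exists an interior point $z$ of $X^+$ such that $Tz \ll z$. (vi) There exist an interior point $z$ of $X^+$ and $\lambda\in(0,1)$ such that $Tz \le \lambda z$. (vii) (Strong stability) $T^k x \to 0$ as $k\to\infty$ for each $x\in X$. (viii) For each $x \in X^+$ we have $\inf_{k\ge 0}\|T^k x\| = 0$.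
   Context: An ordered Banach space $(X,X^+)$ is a real Banach space $X$ with a non-empty closed set $X^+$ such that $\alpha X^+ + \beta X^+\subseteq X^+$ for $\alpha,\beta\ge0$ and $X^+\cap(-X^+)=\{0\}$; $x\le y$ means $y-x\in X^+$, and $x\not\ge y$ means $x-y\notin X^+$. The cone is normal if there is $C>0$ with $\|x\|\le C\|y\|$ whenever $0\le x\le y$. $x\ll y$ means $y-x$ lies in the topological interior of $X^+$. $T$ is positive if $TX^+\subseteq X^+$; $T'$ denotes the dual (adjoint) operator on the dual space $X'$, and $(X')^+=\{x'\in X':x'(x)\ge0 \ \forall x\in X^+\}$ with the induced order. $\operatorname{r}(T)$ is the spectral radius of (the complexification of) $T$. *)

theory Defs
  imports "HOL-Analysis.Analysis"
begin

definition ordered_cone :: "'a::real_normed_vector set \<Rightarrow> bool" where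
  "ordered_cone K \<longleftrightarrow> K \<noteq> {} \<and> closed K \<and>
     (\<forall>\<alpha> \<beta> x y. \<alpha> \<ge> 0 \<longrightarrow> \<beta> \<ge> 0 \<longrightarrow> x \<in> K \<longrightarrow> y \<in> K \<longrightarrow> \<alpha> *\<^sub>R x + \<beta> *\<^sub>R y \<in> K) \<and>
     K \<inter> uminus ` K = {0}"

definition normal_cone :: "'a::real_normed_vector set \<Rightarrow> bool" where
  "normal_cone K \<longleftrightarrow> (\<exists>C>0. \<forall>x y. x \<in> K \<longrightarrow> y - x \<in> K \<longrightarrow> norm x \<le> C * norm y)"

text \<open>Spectrum of the complexification of a real operator T on X: the complexification
  is X \<times> X with (a + i b)(x, y) = (a x - b y, a y + b x) and T_C (x,y) = (T x, T y).
  For a bounded operator on a Banach space, T_C - \<lambda> has a bounded inverse iff it is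
  bijective (open mapping theorem), so the spectrum is the set of \<lambda> where
  T_C - \<lambda> is not bijective.\<close>
definition cspectrum :: "('a::real_normed_vector \<Rightarrow> 'a) \<Rightarrow> complex set" where
  "cspectrum T = {c. \<not> bij (\<lambda>(x, y). (T x - (Re c *\<^sub>R x - Im c *\<^sub>R y),
                                      T y - (Re c *\<^sub>R y + Im c *\<^sub>R x)))}"

definition spectral_radius :: "('a::real_normed_vector \<Rightarrow> 'a) \<Rightarrow> real" where
  "spectral_radius T = (if cspectrum T = {} then 0 else Sup (cmod ` cspectrum T))"

end

theory Submission
  imports Defs
begin

locale ocone =
  fixes K :: "'a::banach set"
  assumes cone: "ordered_cone K" and normal: "normal_cone K"
begin

lemma zero_in: "0 \<in> K"
proof -
  obtain x where "x \<in> K" using cone unfolding ordered_cone_def by auto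
  then have "0 *\<^sub>R x + 0 *\<^sub>R x \<in> K" using cone unfolding ordered_cone_def by blast
  then show ?thesis by simp
qed

lemma add_in: "x \<in> K \<Longrightarrow> y \<in> K \<Longrightarrow> x + y \<in> K"
  using cone unfolding ordered_cone_def by (metis scaleR_one order_refl zero_le_one)

lemma scale_in: "x \<in> K \<Longrightarrow> 0 \<le> t \<Longrightarrow> t *\<^sub>R x \<in> K"
  using cone zero_in unfolding ordered_cone_def by (metis add.right_neutral scaleR_zero_right order_refl)

lemma closedK: "closed K" using cone unfolding ordered_cone_def by auto

lemma pointed: "x \<in> K \<Longrightarrow> - x \<in> K \<Longrightarrow> x = 0"
proof -
  assume a: "x \<in> K" "- x \<in> K"
  then have "x \<in> uminus ` K" by (metis image_eqI minus_minus)
  with a have "x \<in> K \<inter> uminus ` K" by auto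
  then show ?thesis using cone unfolding ordered_cone_def by auto
qed

lemma sum_in: "finite S \<Longrightarrow> (\<And>i. i \<in> S \<Longrightarrow> f i \<in> K) \<Longrightarrow> sum f S \<in> K"
  by (induction S rule: finite_induct) (auto simp: zero_in add_in)

definition "Cn = (SOME C. C > 0 \<and> (\<forall>x y. x \<in> K \<longrightarrow> y - x \<in> K \<longrightarrow> norm x \<le> C * norm y))"

lemma Cn: "Cn > 0" "x \<in> K \<Longrightarrow> y - x \<in> K \<Longrightarrow> norm x \<le> Cn * norm y"
proof -
  have "\<exists>C. C > 0 \<and> (\<forall>x y. x \<in> K \<longrightarrow> y - x \<in> K \<longrightarrow> norm x \<le> C * norm y)"
    using normal unfolding normal_cone_def by auto
  from someI_ex[OF this] show "Cn > 0" "x \<in> K \<Longrightarrow> y - x \<in> K \<Longrightarrow> norm x \<le> Cn * norm y"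
    unfolding Cn_def by auto
qed

lemma sandwich:
  assumes "a - x \<in> K" "a + x \<in> K"
  shows "norm x \<le> (2 * Cn + 1) * norm a"
proof -
  have "(2 *\<^sub>R a) - (a + x) = a - x" by (simp add: scaleR_2 algebra_simps)
  then have "norm (a + x) \<le> Cn * norm (2 *\<^sub>R a)" using Cn(2)[of "a+x" "2 *\<^sub>R a"] assms by metis
  then have "norm (a + x) \<le> 2 * Cn * norm a" by simp
  moreover have "norm x \<le> norm (a + x) + norm a"
    by (metis add_diff_cancel_left' norm_triangle_ineq4)
  ultimately show ?thesis by (simp add: algebra_simps)
qed

lemma order_unit:
  assumes "z \<in> interior K"
  shows "\<exists>d>0. \<forall>x. (norm x / d) *\<^sub>R z - x \<in> K \<and> (norm x / d) *\<^sub>R z + x \<in> K"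
proof -
  obtain e where e: "e > 0" "ball z e \<subseteq> K" using assms mem_interior by blast
  define d where "d = e / 2"
  have d: "d > 0" "d < e" using e by (auto simp: d_def)
  have "(norm x / d) *\<^sub>R z - x \<in> K \<and> (norm x / d) *\<^sub>R z + x \<in> K" for x
  proof (cases "x = 0")
    case True then show ?thesis by (simp add: zero_in)
  next
    case False
    define u where "u = (d / norm x) *\<^sub>R x"
    have nu: "norm u = d" using False d by (simp add: u_def)
    have "z - u \<in> K" "z + u \<in> K" using e(2) nu d
      by (auto simp: dist_norm subset_iff)
    then have "(norm x / d) *\<^sub>R (z - u) \<in> K" "(norm x / d) *\<^sub>R (z + u) \<in> K"
      using d by (auto intro!: scale_in)
    moreover have "(norm x / d) *\<^sub>R u = x" using False d by (simp add: u_def)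
    ultimately show ?thesis by (simp add: algebra_simps)
  qed
  then show ?thesis using d by blast
qed

lemma interior_add: "u \<in> interior K \<Longrightarrow> k \<in> K \<Longrightarrow> u + k \<in> interior K"
proof -
  assume u: "u \<in> interior K" and k: "k \<in> K"
  obtain e where e: "e > 0" "ball u e \<subseteq> K" using u mem_interior by blast
  have "ball (u + k) e \<subseteq> K"
  proof
    fix w assume "w \<in> ball (u + k) e"
    then have "w - k \<in> ball u e" by (simp add: dist_norm algebra_simps)
    then have "w - k \<in> K" using e by auto
    from add_in[OF this k] show "w \<in> K" by simp
  qed
  then show ?thesis using e mem_interior by blast
qed

lemma interior_scale: "u \<in> interior K \<Longrightarrow> t > 0 \<Longrightarrow> t *\<^sub>R u \<in> interior K"
proof -
  assume u: "u \<in> interior K" and t: "t > 0"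
  obtain e where e: "e > 0" "ball u e \<subseteq> K" using u mem_interior by blast
  have "ball (t *\<^sub>R u) (t * e) \<subseteq> K"
  proof
    fix w assume "w \<in> ball (t *\<^sub>R u) (t * e)"
    then have "norm (t *\<^sub>R u - w) < t * e" by (simp add: dist_norm)
    moreover have "t *\<^sub>R u - w = t *\<^sub>R (u - (1/t) *\<^sub>R w)" using t by (simp add: algebra_simps)
    ultimately have "t * norm (u - (1/t) *\<^sub>R w) < t * e" using t by simp
    then have "(1/t) *\<^sub>R w \<in> ball u e" using t by (simp add: dist_norm)
    then have "(1/t) *\<^sub>R w \<in> K" using e by auto
    from scale_in[OF this, of t] t show "w \<in> K" by simp
  qed
  then show ?thesis using e t mem_interior by (meson mult_pos_pos)
qed

lemma generating:
  assumes "z \<in> interior K"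
  shows "\<exists>a b. a \<in> K \<and> b \<in> K \<and> x = a - b"
proof -
  obtain d where d: "d > 0" "\<And>x. (norm x / d) *\<^sub>R z - x \<in> K \<and> (norm x / d) *\<^sub>R z + x \<in> K"
    using order_unit[OF assms] by blast
  have "z \<in> K" using assms interior_subset by blast
  then have "(norm x / d) *\<^sub>R z \<in> K" using d scale_in[of z "norm x / d"] by simp
  moreover have "x = (norm x / d) *\<^sub>R z - ((norm x / d) *\<^sub>R z - x)" by simp
  ultimately show ?thesis using d(2) by blast
qed

end

definition graph_ok :: "('a::real_vector \<Rightarrow> real) \<Rightarrow> 'a \<Rightarrow> ('a \<times> real) set \<Rightarrow> bool" where
  "graph_ok p d0 G \<longleftrightarrow> (\<forall>x a b. (x,a)\<in>G \<longrightarrow> (x,b)\<in>G \<longrightarrow> a = b)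
     \<and> (\<forall>x a y b. (x,a)\<in>G \<longrightarrow> (y,b)\<in>G \<longrightarrow> (x+y, a+b) \<in> G)
     \<and> (\<forall>x a c. (x,a) \<in> G \<longrightarrow> (c *\<^sub>R x, c*a) \<in> G)
     \<and> (\<forall>x a. (x,a)\<in>G \<longrightarrow> a \<le> p x) \<and> (d0, 1) \<in> G"

lemma hahn_banach:
  fixes p :: "'a::real_vector \<Rightarrow> real" and d0 :: 'a
  assumes sub: "\<And>x y. p (x + y) \<le> p x + p y"
    and hom: "\<And>x t. t > 0 \<Longrightarrow> p (t *\<^sub>R x) = t * p x"
    and line: "\<And>t. t \<le> p (t *\<^sub>R d0)"
  shows "\<exists>f. linear f \<and> (\<forall>x. f x \<le> p x) \<and> f d0 = 1"
proof -
  have p0: "p 0 = 0" using hom[of 2 0] by simp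
  have d0nz: "d0 \<noteq> 0" using line[of 1] line[of 2] p0 by auto
  define A where "A = {G. graph_ok p d0 G}"
  define G0 where "G0 = range (\<lambda>t. (t *\<^sub>R d0, t))"
  have G0: "G0 \<in> A"
    unfolding A_def graph_ok_def G0_def
  proof (intro CollectI conjI allI impI)
    fix x a b assume "(x, a) \<in> range (\<lambda>t. (t *\<^sub>R d0, t))" "(x, b) \<in> range (\<lambda>t. (t *\<^sub>R d0, t))"
    then show "a = b" using d0nz by auto
  next
    fix x a y b assume "(x, a) \<in> range (\<lambda>t. (t *\<^sub>R d0, t))" "(y, b) \<in> range (\<lambda>t. (t *\<^sub>R d0, t))"
    then show "(x + y, a + b) \<in> range (\<lambda>t. (t *\<^sub>R d0, t))" by (auto simp: scaleR_add_left[symmetric])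
  next
    fix x a c assume "(x, a) \<in> range (\<lambda>t. (t *\<^sub>R d0, t))"
    then show "(c *\<^sub>R x, c * a) \<in> range (\<lambda>t. (t *\<^sub>R d0, t))" by auto
  next
    fix x a assume "(x, a) \<in> range (\<lambda>t. (t *\<^sub>R d0, t))"
    then show "a \<le> p x" using line by auto
  next
    show "(d0, 1) \<in> range (\<lambda>t. (t *\<^sub>R d0, t))" by (auto intro: image_eqI[of _ _ 1])
  qed
  have "\<forall>C\<in>chains A. \<exists>U\<in>A. \<forall>X\<in>C. X \<subseteq> U"
  proof
    fix C assume C: "C \<in> chains A"
    show "\<exists>U\<in>A. \<forall>X\<in>C. X \<subseteq> U"
    proof (cases "C = {}")
      case True then show ?thesis using G0 by auto
    next
      case False
      have CA: "C \<subseteq> A" and ch: "\<And>X Y. X \<in> C \<Longrightarrow> Y \<in> C \<Longrightarrow> X \<subseteq> Y \<or> Y \<subseteq> X"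
        using C unfolding chains_def chain_subset_def by auto
      have two: "\<exists>Z\<in>C. u \<in> Z \<and> v \<in> Z" if uv: "u \<in> \<Union>C" "v \<in> \<Union>C" for u v
      proof -
        obtain X Y where "X \<in> C" "Y \<in> C" "u \<in> X" "v \<in> Y" using uv by auto
        then show ?thesis using ch[of X Y] by blast
      qed
      have "\<Union>C \<in> A" unfolding A_def graph_ok_def
      proof (intro CollectI conjI allI impI)
        fix x a b assume "(x, a) \<in> \<Union>C" "(x, b) \<in> \<Union>C"
        then obtain Z where "Z \<in> C" "(x,a) \<in> Z" "(x,b) \<in> Z" using two by blast
        then show "a = b" using CA unfolding A_def graph_ok_def by blast
      next
        fix x a y b assume "(x, a) \<in> \<Union>C" "(y, b) \<in> \<Union>C"
        then obtain Z where "Z \<in> C" "(x,a) \<in> Z" "(y,b) \<in> Z" using two by blast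
        then show "(x + y, a + b) \<in> \<Union>C" using CA unfolding A_def graph_ok_def by blast
      next
        fix x a c assume "(x, a) \<in> \<Union>C"
        then obtain Z where "Z \<in> C" "(x,a) \<in> Z" by blast
        then show "(c *\<^sub>R x, c * a) \<in> \<Union>C" using CA unfolding A_def graph_ok_def by blast
      next
        fix x a assume "(x, a) \<in> \<Union>C"
        then obtain Z where "Z \<in> C" "(x,a) \<in> Z" by blast
        then show "a \<le> p x" using CA unfolding A_def graph_ok_def by blast
      next
        obtain Z where "Z \<in> C" using False by blast
        then show "(d0, 1) \<in> \<Union>C" using CA unfolding A_def graph_ok_def by blast
      qed
      then show ?thesis by blast
    qed
  qed
  from Zorn_Lemma2[OF this] obtain M where MA: "M \<in> A" and maxM: "\<And>X. X \<in> A \<Longrightarrow> M \<subseteq> X \<Longrightarrow> X = M"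
    by blast
  have Mfun: "\<And>x a b. (x,a)\<in>M \<Longrightarrow> (x,b)\<in>M \<Longrightarrow> a = b"
    and Madd: "\<And>x a y b. (x,a)\<in>M \<Longrightarrow> (y,b)\<in>M \<Longrightarrow> (x+y, a+b) \<in> M"
    and Msc: "\<And>x a c. (x,a) \<in> M \<Longrightarrow> (c *\<^sub>R x, c*a) \<in> M"
    and Mdom: "\<And>x a. (x,a)\<in>M \<Longrightarrow> a \<le> p x" and Md0: "(d0, 1) \<in> M"
    using MA unfolding A_def graph_ok_def by blast+
  have M00: "(0, 0) \<in> M" using Msc[OF Md0, of 0] by simp
  have total: "\<exists>a. (x1, a) \<in> M" for x1
  proof (rule ccontr)
    assume nx: "\<nexists>a. (x1, a) \<in> M"
    define S where "S = {a - p (y - x1) | y a. (y,a) \<in> M}"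
    define c where "c = Sup S"
    have key: "a - p (y - x1) \<le> p (w + x1) - b" if "(y,a) \<in> M" "(w,b) \<in> M" for y a w b
    proof -
      have "a + b \<le> p (y + w)" using Mdom[OF Madd[OF that]] .
      also have "p (y + w) \<le> p (y - x1) + p (w + x1)" using sub[of "y - x1" "w + x1"] by simp
      finally show ?thesis by simp
    qed
    have Sne: "S \<noteq> {}" using M00 unfolding S_def by blast
    have Sbdd: "bdd_above S" unfolding S_def bdd_above_def using key[OF _ M00] by fastforce
    have c1: "a - p (y - x1) \<le> c" if "(y,a) \<in> M" for y a
      unfolding c_def using that Sbdd by (auto intro!: cSup_upper simp: S_def)
    have c2: "c \<le> p (w + x1) - b" if "(w,b) \<in> M" for w b
      unfolding c_def using that Sne key by (auto intro!: cSup_least simp: S_def)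
    define M' where "M' = {(y + t *\<^sub>R x1, a + t * c) | y a t. (y,a) \<in> M}"
    have "M' \<in> A" unfolding A_def graph_ok_def
    proof (intro CollectI conjI allI impI)
      fix x a b assume "(x, a) \<in> M'" "(x, b) \<in> M'"
      then obtain y1 a1 t1 y2 a2 t2 where e: "(y1,a1) \<in> M" "(y2,a2) \<in> M"
        "x = y1 + t1 *\<^sub>R x1" "a = a1 + t1 * c" "x = y2 + t2 *\<^sub>R x1" "b = a2 + t2 * c"
        unfolding M'_def by blast
      have "t1 = t2"
      proof (rule ccontr)
        assume ne: "t1 \<noteq> t2"
        have "(y2 + (-1) *\<^sub>R y1, a2 + (-1) * a1) \<in> M" using Madd[OF e(2) Msc[OF e(1)]] .
        from Msc[OF this, of "1/(t1 - t2)"] have "((1/(t1 - t2)) *\<^sub>R (y2 - y1), (1/(t1-t2)) * (a2 - a1)) \<in> M"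
          by simp
        moreover have "(1/(t1 - t2)) *\<^sub>R (y2 - y1) = x1"
        proof -
          have "y2 - y1 = (t1 - t2) *\<^sub>R x1" using e(3,5) by (simp add: algebra_simps)
          then show ?thesis using ne by simp
        qed
        ultimately show False using nx by auto
      qed
      then have "y1 = y2" using e by simp
      then have "a1 = a2" using Mfun e by blast
      then show "a = b" using e \<open>t1 = t2\<close> by simp
    next
      fix x a y b assume "(x, a) \<in> M'" "(y, b) \<in> M'"
      then obtain y1 a1 t1 y2 a2 t2 where e: "(y1,a1) \<in> M" "(y2,a2) \<in> M"
        "x = y1 + t1 *\<^sub>R x1" "a = a1 + t1 * c" "y = y2 + t2 *\<^sub>R x1" "b = a2 + t2 * c"
        unfolding M'_def by blast
      have "(x + y, a + b) = ((y1 + y2) + (t1 + t2) *\<^sub>R x1, (a1 + a2) + (t1 + t2) * c)"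
        using e by (simp add: algebra_simps)
      then show "(x + y, a + b) \<in> M'" unfolding M'_def using Madd[OF e(1,2)] by blast
    next
      fix x a s assume "(x, a) \<in> M'"
      then obtain y1 a1 t1 where e: "(y1,a1) \<in> M" "x = y1 + t1 *\<^sub>R x1" "a = a1 + t1 * c"
        unfolding M'_def by blast
      have "(s *\<^sub>R x, s * a) = (s *\<^sub>R y1 + (s * t1) *\<^sub>R x1, s * a1 + (s * t1) * c)"
        using e by (simp add: algebra_simps)
      then show "(s *\<^sub>R x, s * a) \<in> M'" unfolding M'_def using Msc[OF e(1)] by blast
    next
      fix x a assume "(x, a) \<in> M'"
      then obtain y a1 t where e: "(y,a1) \<in> M" "x = y + t *\<^sub>R x1" "a = a1 + t * c"
        unfolding M'_def by blast
      show "a \<le> p x"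
      proof (cases t "0::real" rule: linorder_cases)
        case equal then show ?thesis using e Mdom by simp
      next
        case greater
        have m: "((1/t) *\<^sub>R y, (1/t) * a1) \<in> M" using Msc[OF e(1)] .
        have "c \<le> p ((1/t) *\<^sub>R y + x1) - (1/t) * a1" using c2[OF m] .
        then have "t * (c + (1/t) * a1) \<le> t * p ((1/t) *\<^sub>R y + x1)" using greater
          by (intro mult_left_mono) auto
        then have "t * c \<le> t * p ((1/t) *\<^sub>R y + x1) - a1" using greater
          by (simp add: algebra_simps)
        also have "t * p ((1/t) *\<^sub>R y + x1) = p (t *\<^sub>R ((1/t) *\<^sub>R y + x1))" using hom greater by simp
        also have "t *\<^sub>R ((1/t) *\<^sub>R y + x1) = x" using e greater by (simp add: algebra_simps)
        finally show ?thesis using e by simp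
      next
        case less
        define s where "s = - t"
        have s: "s > 0" using less by (simp add: s_def)
        have m: "((1/s) *\<^sub>R y, (1/s) * a1) \<in> M" using Msc[OF e(1)] .
        have "(1/s) * a1 - p ((1/s) *\<^sub>R y - x1) \<le> c" using c1[OF m] .
        then have "a1 - s * p ((1/s) *\<^sub>R y - x1) \<le> s * c" using s
          by (simp add: algebra_simps mult_le_cancel_left divide_simps)
        also have "s * p ((1/s) *\<^sub>R y - x1) = p (s *\<^sub>R ((1/s) *\<^sub>R y - x1))" using hom s by simp
        also have "s *\<^sub>R ((1/s) *\<^sub>R y - x1) = x" using e s by (simp add: algebra_simps s_def)
        finally show ?thesis using e by (simp add: s_def)
      qed
    next
      show "(d0, 1) \<in> M'" unfolding M'_def using Md0 by force
    qed
    moreover have "M \<subseteq> M'" unfolding M'_def by force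
    ultimately have "M' = M" using maxM by blast
    moreover have "(x1, c) \<in> M'" unfolding M'_def using M00 by force
    ultimately show False using nx by auto
  qed
  define f where "f x = (THE a. (x,a) \<in> M)" for x
  have fM: "(x, f x) \<in> M" for x
    unfolding f_def using total[of x] Mfun by (metis theI)
  have fe: "(x, a) \<in> M \<Longrightarrow> f x = a" for x a using fM Mfun by blast
  have "linear f"
  proof (rule linearI)
    fix x y show "f (x + y) = f x + f y" using fe[OF Madd[OF fM fM]] .
  next
    fix c x show "f (c *\<^sub>R x) = c *\<^sub>R f x" using fe[OF Msc[OF fM]] by simp
  qed
  moreover have "\<forall>x. f x \<le> p x" using Mdom fM by blast
  moreover have "f d0 = 1" using fe[OF Md0] .
  ultimately show ?thesis by blast
qed

lemma iter_fix:
  fixes G :: "'b::banach \<Rightarrow> 'b" and Ks :: "'b set"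
  assumes lin: "linear G" and contr: "\<And>w. norm ((G^^k) w) \<le> (1/2) * norm w"
    and Ks: "closed Ks" "Ks \<noteq> {}" "\<And>w. w \<in> Ks \<Longrightarrow> G w + p \<in> Ks"
  shows "\<exists>w\<in>Ks. G w + p = w" and "\<And>w w'. G w + p = w \<Longrightarrow> G w' + p = w' \<Longrightarrow> w = w'"
proof -
  have Gdiff: "G a - G b = G (a - b)" for a b using lin by (simp add: linear_diff)
  have Gk_fix: "d = 0" if "G d = d" for d
  proof -
    have "(G^^n) d = d" for n by (induction n) (auto simp: that)
    then have "norm d \<le> (1/2) * norm d" using contr[of d] by simp
    then show ?thesis by simp
  qed
  show uniq: "w = w'" if "G w + p = w" "G w' + p = w'" for w w'
  proof -
    have "G (w - w') = w - w'" using that Gdiff by (metis add_diff_cancel_right)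
    then have "w - w' = 0" using Gk_fix by blast
    then show ?thesis by simp
  qed
  define \<Phi> where "\<Phi> w = G w + p" for w
  have it: "(\<Phi>^^n) u - (\<Phi>^^n) v = (G^^n) (u - v)" for n u v
  proof (induction n)
    case 0 then show ?case by simp
  next
    case (Suc n)
    have "(\<Phi>^^Suc n) u - (\<Phi>^^Suc n) v = G ((\<Phi>^^n) u) - G ((\<Phi>^^n) v)" by (simp add: \<Phi>_def)
    also have "\<dots> = G ((G^^n) (u - v))" using Gdiff Suc by simp
    finally show ?case by simp
  qed
  have inv: "(\<Phi>^^n) w \<in> Ks" if "w \<in> Ks" for n w
    using that by (induction n) (auto simp: \<Phi>_def Ks(3))
  have "\<exists>!w\<in>Ks. (\<Phi>^^k) w = w"
  proof (rule Banach_fix[of Ks "1/2"])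
    show "complete Ks" using Ks(1) complete_eq_closed by blast
    show "(\<Phi>^^k) ` Ks \<subseteq> Ks" using inv by auto
    show "dist ((\<Phi>^^k) x) ((\<Phi>^^k) y) \<le> 1/2 * dist x y" for x y
      unfolding dist_norm it using contr by simp
  qed (use Ks in auto)
  then obtain w0 where w0: "w0 \<in> Ks" "(\<Phi>^^k) w0 = w0" by blast
  have "(\<Phi>^^k) (\<Phi> w0) = \<Phi> w0" using w0(2) by (metis comp_apply funpow_swap1)
  then have "(G^^k) (\<Phi> w0 - w0) = \<Phi> w0 - w0" using it[of k "\<Phi> w0" w0] w0(2) by simp
  then have "norm (\<Phi> w0 - w0) \<le> (1/2) * norm (\<Phi> w0 - w0)" using contr by metis
  then have "\<Phi> w0 = w0" by simp
  then show "\<exists>w\<in>Ks. G w + p = w" using w0 by (auto simp: \<Phi>_def)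
qed

locale posop = ocone K for K :: "'a::banach set" +
  fixes T :: "'a \<Rightarrow> 'a"
  assumes lin: "bounded_linear T" and pos: "T ` K \<subseteq> K" and int_ne: "interior K \<noteq> {}"
begin

lemma Tlin: "linear T" using lin bounded_linear.linear by blast
lemma Tdiff: "T (a - b) = T a - T b" using lin by (simp add: linear_simps)
lemma Tadd: "T (a + b) = T a + T b" using lin by (simp add: linear_simps)
lemma Tscale: "T (c *\<^sub>R a) = c *\<^sub>R T a" using lin by (simp add: linear_simps)
lemma Tpos: "x \<in> K \<Longrightarrow> T x \<in> K" using pos by auto

lemma Tk_lin: "linear (T^^k)"
  by (induction k) (auto intro: linear_compose[OF _ Tlin, unfolded o_def] simp: id_def[symmetric] linear_id)

lemma Tk_pos: "x \<in> K \<Longrightarrow> (T^^k) x \<in> K"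
  by (induction k) (auto simp: Tpos)

definition J :: "complex \<Rightarrow> 'a \<times> 'a \<Rightarrow> 'a \<times> 'a" where
  "J d w = (Re d *\<^sub>R fst w - Im d *\<^sub>R snd w, Re d *\<^sub>R snd w + Im d *\<^sub>R fst w)"

definition AA :: "'a \<times> 'a \<Rightarrow> 'a \<times> 'a" where "AA w = (T (fst w), T (snd w))"

lemma J_mult: "J d (J e w) = J (d * e) w"
  by (simp add: J_def algebra_simps)

lemma J_one: "J 1 w = w" by (simp add: J_def)

lemma J_lin: "linear (J d)"
  by (rule linearI) (auto simp: J_def algebra_simps)

lemma J_AA: "J d (AA w) = AA (J d w)"
  by (simp add: J_def AA_def Tdiff Tadd Tscale)

lemma AA_lin: "linear AA"
  by (rule linearI) (auto simp: AA_def Tadd Tscale)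

lemma J_norm: "norm (J d w) \<le> 4 * cmod d * norm w"
proof -
  obtain x y where w: "w = (x,y)" by fastforce
  have nx: "norm x \<le> norm w" "norm y \<le> norm w" using w norm_fst_le norm_snd_le by auto
  have c: "\<bar>Re d\<bar> \<le> cmod d" "\<bar>Im d\<bar> \<le> cmod d" by (auto simp: abs_Re_le_cmod abs_Im_le_cmod)
  have "norm (Re d *\<^sub>R x - Im d *\<^sub>R y) \<le> \<bar>Re d\<bar> * norm x + \<bar>Im d\<bar> * norm y"
    by (metis norm_scaleR norm_triangle_ineq4 real_norm_def)
  also have "\<dots> \<le> cmod d * norm w + cmod d * norm w"
    using c nx by (intro add_mono mult_mono) auto
  finally have 1: "norm (Re d *\<^sub>R x - Im d *\<^sub>R y) \<le> 2 * cmod d * norm w" by simp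
  have "norm (Re d *\<^sub>R y + Im d *\<^sub>R x) \<le> \<bar>Re d\<bar> * norm y + \<bar>Im d\<bar> * norm x"
    by (metis norm_scaleR norm_triangle_ineq real_norm_def)
  also have "\<dots> \<le> cmod d * norm w + cmod d * norm w"
    using c nx by (intro add_mono mult_mono) auto
  finally have 2: "norm (Re d *\<^sub>R y + Im d *\<^sub>R x) \<le> 2 * cmod d * norm w" by simp
  have "norm (J d w) \<le> norm (Re d *\<^sub>R x - Im d *\<^sub>R y) + norm (Re d *\<^sub>R y + Im d *\<^sub>R x)"
    unfolding J_def w by (simp add: norm_Pair_le)
  then show ?thesis using 1 2 by simp
qed

lemma AA_pow: "(AA^^k) w = ((T^^k) (fst w), (T^^k) (snd w))"
  by (induction k) (auto simp: AA_def)

lemma spec_out: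
  assumes bnd: "\<And>k x. norm ((T^^k) x) \<le> M * q^k * norm x" and q: "q \<ge> 0" and c: "cmod c > q"
  shows "c \<notin> cspectrum T"
proof -
  have c0: "c \<noteq> 0" using c q by auto
  define M' where "M' = max M 0"
  have M0: "M' \<ge> 0" by (simp add: M'_def)
  have bnd': "norm ((T^^k) x) \<le> M' * q^k * norm x" for k x
  proof -
    have "M * q^k * norm x \<le> M' * q^k * norm x" using q
      by (intro mult_right_mono) (auto simp: M'_def)
    then show ?thesis using bnd[of k x] by linarith
  qed
  define G where "G w = J (inverse c) (AA w)" for w
  have Glin: "linear G" unfolding G_def using linear_compose[OF AA_lin J_lin] by (simp add: o_def)
  have Gpow: "(G^^k) w = J (inverse c ^ k) ((AA^^k) w)" for k w
  proof (induction k)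
    case 0 then show ?case by (simp add: J_one)
  next
    case (Suc k)
    have "(G^^Suc k) w = J (inverse c) (AA (J (inverse c ^ k) ((AA^^k) w)))" by (simp add: G_def Suc)
    also have "\<dots> = J (inverse c ^ Suc k) ((AA^^Suc k) w)" by (simp add: J_AA J_mult)
    finally show ?case .
  qed
  define r where "r = q / cmod c"
  have r: "r \<ge> 0" "r < 1" using q c by (auto simp: r_def divide_simps)
  obtain k where k: "r^k < 1 / (16 * (M' + 1))"
    using real_arch_pow_inv[of "1 / (16 * (M' + 1))" r] r M0 by auto
  have Gk: "norm ((G^^k) w) \<le> (1/2) * norm w" for w
  proof -
    have "norm ((AA^^k) w) \<le> norm ((T^^k) (fst w)) + norm ((T^^k) (snd w))"
      unfolding AA_pow by (rule norm_Pair_le)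
    also have "\<dots> \<le> M' * q^k * norm w + M' * q^k * norm w"
      using bnd'[of k "fst w"] bnd'[of k "snd w"] norm_fst_le[of "fst w" "snd w"] norm_snd_le[of "snd w" "fst w"]
        M0 q by (intro add_mono) (auto intro: order_trans[OF _ mult_left_mono] mult_nonneg_nonneg)
    finally have 1: "norm ((AA^^k) w) \<le> 2 * M' * q^k * norm w" by (simp add: ac_simps)
    have "norm ((G^^k) w) \<le> 4 * cmod (inverse c ^ k) * norm ((AA^^k) w)" unfolding Gpow by (rule J_norm)
    also have "\<dots> \<le> 4 * cmod (inverse c ^ k) * (2 * M' * q^k * norm w)"
      using 1 by (intro mult_left_mono) auto
    also have "\<dots> = 8 * M' * r^k * norm w"
      using c0 by (simp add: r_def norm_power norm_divide power_divide divide_simps)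
    also have "\<dots> \<le> 8 * (M' + 1) * (1 / (16 * (M' + 1))) * norm w"
      using k M0 r by (intro mult_right_mono mult_mono) auto
    also have "\<dots> = (1/2) * norm w" using M0 by (simp add: divide_simps)
    finally show ?thesis .
  qed
  have Jc: "J c (J (inverse c) p) = p" "J (inverse c) (J c p) = p" for p
    using c0 by (simp_all add: J_mult J_one)
  have Jd: "J d (a - b) = J d a - J d b" "J d (a + b) = J d a + J d b" for d a b
    using J_lin[of d] by (simp_all add: linear_diff linear_add)
  have F: "(\<lambda>(x, y). (T x - (Re c *\<^sub>R x - Im c *\<^sub>R y), T y - (Re c *\<^sub>R y + Im c *\<^sub>R x))) = (\<lambda>w. AA w - J c w)"
    by (auto simp: AA_def J_def)
  have eq: "AA w - J c w = p \<longleftrightarrow> G w + (- J (inverse c) p) = w" for w p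
  proof
    assume "AA w - J c w = p"
    then have "J (inverse c) (AA w - J c w) = J (inverse c) p" by simp
    then show "G w + (- J (inverse c) p) = w" using Jc Jd by (simp add: G_def) (simp add: algebra_simps)
  next
    assume "G w + (- J (inverse c) p) = w"
    then have "J c (G w) - J c (J (inverse c) p) = J c w" using Jd by (metis diff_conv_add_uminus)
    then show "AA w - J c w = p" using Jc by (simp add: G_def algebra_simps)
  qed
  have "bij (\<lambda>w. AA w - J c w)"
    unfolding bij_iff
  proof
    fix p
    obtain w where "G w + (- J (inverse c) p) = w"
      using iter_fix(1)[OF Glin Gk, of UNIV "- J (inverse c) p"] by auto
    moreover have "\<And>w'. G w' + (- J (inverse c) p) = w' \<Longrightarrow> w' = w"
      using iter_fix(2)[OF Glin Gk, of UNIV] calculation by blast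
    ultimately show "\<exists>!w. AA w - J c w = p" using eq by blast
  qed
  then show ?thesis unfolding cspectrum_def using F by simp
qed

end

context posop begin

definition LL :: "real \<Rightarrow> 'a \<Rightarrow> 'a" where "LL m x = m *\<^sub>R x - T x"
definition SS :: "real \<Rightarrow> 'a \<Rightarrow> 'a" where "SS m = inv (LL m)"
definition good :: "real \<Rightarrow> bool" where
  "good m \<longleftrightarrow> bij (LL m) \<and> (\<forall>y\<in>K. SS m y \<in> K)"

lemma LL_lin: "LL m (a + b) = LL m a + LL m b" "LL m (c *\<^sub>R a) = c *\<^sub>R LL m a"
  "LL m (a - b) = LL m a - LL m b"
  by (auto simp: LL_def Tadd Tscale Tdiff algebra_simps)

lemma SS_props:
  assumes "bij (LL m)"
  shows "LL m (SS m y) = y" "SS m (LL m x) = x"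
    "SS m (a + b) = SS m a + SS m b" "SS m (c *\<^sub>R a) = c *\<^sub>R SS m a" "SS m (a - b) = SS m a - SS m b"
proof -
  show 1: "LL m (SS m y) = y" for y using assms unfolding SS_def by (simp add: bij_is_surj surj_f_inv_f)
  show 2: "SS m (LL m x) = x" for x using assms unfolding SS_def by (simp add: bij_is_inj)
  show "SS m (a + b) = SS m a + SS m b"
    by (metis 1 2 LL_lin(1))
  show "SS m (c *\<^sub>R a) = c *\<^sub>R SS m a"
    by (metis 1 2 LL_lin(2))
  show "SS m (a - b) = SS m a - SS m b"
    by (metis 1 2 LL_lin(3))
qed

lemma good_bound:
  assumes g: "good m" and z: "z \<in> interior K" and d: "d > 0"
    and du: "\<And>x. (norm x / d) *\<^sub>R z - x \<in> K \<and> (norm x / d) *\<^sub>R z + x \<in> K"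
  shows "norm (SS m y) \<le> (2 * Cn + 1) / d * norm (SS m z) * norm y"
proof -
  have b: "bij (LL m)" and p: "\<And>y. y \<in> K \<Longrightarrow> SS m y \<in> K" using g by (auto simp: good_def)
  define s where "s = norm y / d"
  have "SS m (s *\<^sub>R z - y) \<in> K" "SS m (s *\<^sub>R z + y) \<in> K" using du[of y] p by (auto simp: s_def)
  then have "s *\<^sub>R SS m z - SS m y \<in> K" "s *\<^sub>R SS m z + SS m y \<in> K"
    using SS_props[OF b] by auto
  from sandwich[OF this] have "norm (SS m y) \<le> (2 * Cn + 1) * (s * norm (SS m z))"
    using d by (simp add: s_def)
  then show ?thesis using d by (simp add: s_def field_simps)
qed

lemma fix_solve:
  assumes G: "linear G" "\<And>w. norm (G w) \<le> (1/2) * norm w"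
    and eqv: "\<And>w y. LL l w = y \<longleftrightarrow> G w + P y = w"
    and posP: "\<And>y. y \<in> K \<Longrightarrow> P y \<in> K" and posG: "\<And>w. w \<in> K \<Longrightarrow> G w \<in> K"
  shows "good l"
proof -
  have Gk: "norm ((G^^1) w) \<le> (1/2) * norm w" for w using G(2) by simp
  have ex: "\<exists>!w. LL l w = y" for y
  proof -
    obtain w where "G w + P y = w" using iter_fix(1)[OF G(1) Gk, of UNIV "P y"] by auto
    moreover have "w' = w" if "G w' + P y = w'" for w'
      using iter_fix(2)[OF G(1) Gk, of UNIV] calculation that by blast
    ultimately show ?thesis using eqv by blast
  qed
  then have b: "bij (LL l)" unfolding bij_iff by blast
  have "SS l y \<in> K" if y: "y \<in> K" for y
  proof -
    have "\<exists>w\<in>K. G w + P y = w"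
      using iter_fix(1)[OF G(1) Gk, of K "P y"] closedK zero_in posG posP[OF y] add_in by auto
    then obtain w where "w \<in> K" "LL l w = y" using eqv by blast
    then show ?thesis using SS_props(2)[OF b, of w] by simp
  qed
  then show ?thesis using b by (simp add: good_def)
qed

lemma step_down:
  assumes g: "good m" and B: "\<And>y. norm (SS m y) \<le> B * norm y" "B \<ge> 0"
    and l: "l \<le> m" "(m - l) * B \<le> 1/2"
  shows "good l"
proof -
  have b: "bij (LL m)" and p: "\<And>y. y \<in> K \<Longrightarrow> SS m y \<in> K" using g by (auto simp: good_def)
  note S = SS_props[OF b]
  define h where "h = m - l"
  have h: "h \<ge> 0" "h * B \<le> 1/2" using l by (auto simp: h_def)
  define G where "G w = h *\<^sub>R SS m w" for w
  show ?thesis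
  proof (rule fix_solve[of G _ "SS m"])
    show "linear G" unfolding G_def by (rule linearI) (auto simp: S algebra_simps)
    show "norm (G w) \<le> (1/2) * norm w" for w
    proof -
      have "norm (G w) = h * norm (SS m w)" using h by (simp add: G_def)
      also have "\<dots> \<le> h * (B * norm w)" using B h by (intro mult_left_mono) auto
      also have "\<dots> \<le> (1/2) * norm w" using h by (metis mult.assoc mult_right_mono norm_ge_zero)
      finally show ?thesis .
    qed
    show "LL l w = y \<longleftrightarrow> G w + SS m y = w" for w y
    proof -
      have "G w + SS m y = SS m (h *\<^sub>R w + y)" by (simp add: G_def S)
      then have "G w + SS m y = w \<longleftrightarrow> SS m (h *\<^sub>R w + y) = w" by simp
      also have "\<dots> \<longleftrightarrow> h *\<^sub>R w + y = LL m w" by (metis S(1) S(2))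
      also have "\<dots> \<longleftrightarrow> LL l w = y" by (auto simp: LL_def h_def algebra_simps)
      finally show ?thesis by simp
    qed
    show "SS m y \<in> K" if "y \<in> K" for y using p that .
    show "G w \<in> K" if "w \<in> K" for w using scale_in[OF p[OF that] h(1)] by (simp add: G_def)
  qed
qed

lemma start:
  assumes Lt: "\<And>x. norm (T x) \<le> Lt * norm x" and m: "m > 0" "2 * Lt \<le> m"
  shows "good m"
proof (rule fix_solve[of "\<lambda>w. (1/m) *\<^sub>R T w" _ "\<lambda>y. (1/m) *\<^sub>R y"])
  show "linear (\<lambda>w. (1/m) *\<^sub>R T w)" by (rule linearI) (auto simp: Tadd Tscale algebra_simps)
  show "norm ((1/m) *\<^sub>R T w) \<le> (1/2) * norm w" for w
  proof -
    have "norm ((1/m) *\<^sub>R T w) = norm (T w) / m" using m by simp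
    also have "\<dots> \<le> Lt * norm w / m" using Lt m by (simp add: divide_right_mono)
    also have "\<dots> \<le> (1/2) * norm w"
    proof -
      have "Lt * norm w \<le> (m / 2) * norm w" using m by (intro mult_right_mono) auto
      then show ?thesis using m by (simp add: divide_simps mult.commute)
    qed
    finally show ?thesis .
  qed
  show "LL m w = y \<longleftrightarrow> (1/m) *\<^sub>R T w + (1/m) *\<^sub>R y = w" for w y
  proof -
    have e1: "(1/m) *\<^sub>R T w + (1/m) *\<^sub>R y = (1/m) *\<^sub>R (T w + y)" by (simp add: scaleR_add_right)
    have e2: "(1/m) *\<^sub>R v = w \<longleftrightarrow> v = m *\<^sub>R w" for v
    proof
      assume "(1/m) *\<^sub>R v = w"
      then have "m *\<^sub>R ((1/m) *\<^sub>R v) = m *\<^sub>R w" by simp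
      then show "v = m *\<^sub>R w" using m by simp
    next
      assume "v = m *\<^sub>R w"
      then show "(1/m) *\<^sub>R v = w" using m by simp
    qed
    have e3: "T w + y = m *\<^sub>R w \<longleftrightarrow> LL m w = y"
    proof
      assume "T w + y = m *\<^sub>R w"
      then show "LL m w = y" unfolding LL_def by (metis add_diff_cancel_left')
    next
      assume "LL m w = y"
      then show "T w + y = m *\<^sub>R w" unfolding LL_def by auto
    qed
    show ?thesis unfolding e1 e2 e3 ..
  qed
  show "(1/m) *\<^sub>R y \<in> K" if "y \<in> K" for y using scale_in[OF that, of "1/m"] m by simp
  show "(1/m) *\<^sub>R T w \<in> K" if "w \<in> K" for w using scale_in[OF Tpos[OF that], of "1/m"] m by simp
qed

lemma exists_start: "\<exists>m0. \<forall>m\<ge>m0. good m"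
proof -
  obtain Lt where Lt: "\<And>x. norm (T x) \<le> norm x * Lt" "Lt > 0" using bounded_linear.pos_bounded[OF lin] by blast
  have "good m" if "m \<ge> 2 * Lt" for m
    using start[of Lt m] Lt that by (auto simp: mult.commute)
  then show ?thesis by blast
qed

lemma continuation:
  assumes H: "\<And>m. m \<ge> 1 \<Longrightarrow> (\<forall>\<mu>>m. good \<mu>) \<Longrightarrow>
      \<exists>\<epsilon>>0. \<exists>B\<ge>0. \<forall>\<mu>. m < \<mu> \<and> \<mu> < m + \<epsilon> \<longrightarrow> (\<forall>y. norm (SS \<mu> y) \<le> B * norm y)"
  shows "good 1"
proof -
  define Q where "Q = {m. 1 \<le> m \<and> (\<forall>\<mu>\<ge>m. good \<mu>)}"
  obtain m0 where m0: "\<forall>m\<ge>m0. good m" using exists_start by blast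
  have Qne: "max m0 1 \<in> Q" unfolding Q_def by (intro CollectI conjI allI impI) (use m0 in auto)
  have Qbdd: "bdd_below Q" by (auto simp: Q_def bdd_below_def)
  define m where "m = Inf Q"
  have Qne': "Q \<noteq> {}" using Qne by blast
  have m1: "m \<ge> 1" unfolding m_def by (rule cInf_greatest[OF Qne']) (simp add: Q_def)
  have gm: "\<forall>\<mu>>m. good \<mu>"
  proof (intro allI impI)
    fix \<mu> assume "\<mu> > m"
    then obtain q where "q \<in> Q" "q < \<mu>" using cInf_less_iff[OF _ Qbdd] Qne unfolding m_def by blast
    then show "good \<mu>" by (auto simp: Q_def)
  qed
  obtain \<epsilon> B where eB: "\<epsilon> > 0" "B \<ge> 0" "\<And>\<mu> y. m < \<mu> \<Longrightarrow> \<mu> < m + \<epsilon> \<Longrightarrow> norm (SS \<mu> y) \<le> B * norm y"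
    using H[OF m1 gm] by blast
  define B' where "B' = B + 1"
  have B': "B' > 0" using eB by (simp add: B'_def)
  define \<delta> where "\<delta> = min \<epsilon> (1 / (4 * B')) / 2"
  have \<delta>: "\<delta> > 0" "\<delta> < \<epsilon>" "\<delta> \<le> 1 / (8 * B')" using eB B' by (auto simp: \<delta>_def)
  define \<mu> where "\<mu> = m + \<delta>"
  have g\<mu>: "good \<mu>" using gm \<delta> by (simp add: \<mu>_def)
  have b\<mu>: "norm (SS \<mu> y) \<le> B' * norm y" for y
  proof -
    have "norm (SS \<mu> y) \<le> B * norm y" using eB(3)[of \<mu> y] \<delta> by (simp add: \<mu>_def)
    also have "\<dots> \<le> B' * norm y" by (simp add: B'_def mult_right_mono)
    finally show ?thesis .
  qed
  define \<nu>0 where "\<nu>0 = max 1 (\<mu> - 1 / (2 * B'))"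
  have \<nu>0Q: "\<nu>0 \<in> Q" unfolding Q_def
  proof (intro CollectI conjI allI impI)
    show "1 \<le> \<nu>0" by (simp add: \<nu>0_def)
    fix \<nu> assume \<nu>: "\<nu>0 \<le> \<nu>"
    show "good \<nu>"
    proof (cases "\<nu> > m")
      case True then show ?thesis using gm by blast
    next
      case False
      have "\<nu> \<le> \<mu>" using False \<delta> by (simp add: \<mu>_def)
      moreover have "(\<mu> - \<nu>) * B' \<le> 1/2"
      proof -
        have "\<mu> - \<nu> \<le> 1 / (2 * B')" using \<nu> by (simp add: \<nu>0_def)
        then have "(\<mu> - \<nu>) * B' \<le> 1 / (2 * B') * B'" using B' by (intro mult_right_mono) auto
        then show ?thesis using B' by simp
      qed
      ultimately show ?thesis using step_down[OF g\<mu> b\<mu>] B' by simp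
    qed
  qed
  show ?thesis
  proof (cases "\<nu>0 = 1")
    case True then show ?thesis using \<nu>0Q by (auto simp: Q_def)
  next
    case False
    then have "\<nu>0 = \<mu> - 1 / (2 * B')" by (simp add: \<nu>0_def max_def split: if_splits)
    moreover have "m \<le> \<nu>0" unfolding m_def using \<nu>0Q Qbdd by (rule cInf_lower)
    moreover have "1 / (8 * B') < 1 / (2 * B')" using B' by (simp add: divide_simps)
    ultimately show ?thesis using \<delta> by (simp add: \<mu>_def)
  qed
qed

lemma good1_imp_v:
  assumes "good 1"
  shows "\<exists>z\<in>interior K. z - T z \<in> interior K"
proof -
  obtain z0 where z0: "z0 \<in> interior K" using int_ne by blast
  have b: "bij (LL 1)" and p: "SS 1 z0 \<in> K" using assms z0 interior_subset by (auto simp: good_def)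
  define w where "w = SS 1 z0"
  have e: "w - T w = z0" using SS_props(1)[OF b, of z0] by (simp add: w_def LL_def)
  have "w = z0 + T w" using e by (simp add: algebra_simps)
  moreover have "z0 + T w \<in> interior K" using interior_add[OF z0 Tpos] p by (simp add: w_def)
  ultimately show ?thesis using e z0 by metis
qed

end

context posop begin

lemma Tk_bound:
  assumes "\<And>x. norm (T x) \<le> Lt * norm x" "Lt \<ge> 0"
  shows "norm ((T^^k) x) \<le> 1 * Lt^k * norm x"
proof (induction k)
  case 0 then show ?case by simp
next
  case (Suc k)
  have "norm ((T^^Suc k) x) \<le> Lt * norm ((T^^k) x)" using assms(1) by simp
  also have "\<dots> \<le> Lt * (1 * Lt^k * norm x)" using Suc assms(2) by (intro mult_left_mono) auto
  finally show ?case by simp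
qed

lemma spec_bdd: "\<exists>R. \<forall>c\<in>cspectrum T. cmod c \<le> R"
proof -
  obtain Lt where Lt: "\<And>x. norm (T x) \<le> norm x * Lt" "Lt > 0" using bounded_linear.pos_bounded[OF lin] by blast
  have "cmod c \<le> Lt" if "c \<in> cspectrum T" for c
    using spec_out[of 1 Lt c] Tk_bound[of Lt] Lt that by (force simp: mult.commute)
  then show ?thesis by blast
qed

lemma r_bij:
  assumes r: "spectral_radius T < 1" and m: "m \<ge> 1"
  shows "bij (LL m)"
proof -
  have nin: "complex_of_real m \<notin> cspectrum T"
  proof
    assume a: "complex_of_real m \<in> cspectrum T"
    obtain R where R: "\<forall>c\<in>cspectrum T. cmod c \<le> R" using spec_bdd by blast
    have "cmod (complex_of_real m) \<le> Sup (cmod ` cspectrum T)"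
      using a R by (intro cSup_upper imageI) (auto simp: bdd_above_def)
    then have "m \<le> spectral_radius T" using a m by (auto simp: spectral_radius_def)
    then show False using r m by simp
  qed
  define P where "P = (\<lambda>(x, y). (T x - (Re (complex_of_real m) *\<^sub>R x - Im (complex_of_real m) *\<^sub>R y),
                                      T y - (Re (complex_of_real m) *\<^sub>R y + Im (complex_of_real m) *\<^sub>R x)))"
  have bP: "bij P" using nin unfolding cspectrum_def P_def by simp
  have P: "P (x, y) = (- LL m x, - LL m y)" for x y by (simp add: P_def LL_def)
  show ?thesis unfolding bij_iff
  proof
    fix y
    obtain w where "P w = (- y, 0)" using bP by (metis bij_pointE)
    then obtain a b where "P (a, b) = (- y, 0)" by (cases w) auto
    then have ex: "LL m a = y" using P by simp
    have "a' = a" if "LL m a' = y" for a'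
    proof -
      have "LL m a' = LL m a" using ex that by simp
      moreover have "P (a', 0) = (- LL m a', - LL m 0)" "P (a, 0) = (- LL m a, - LL m 0)" using P by auto
      ultimately have "P (a', 0) = P (a, 0)" by simp
      then show ?thesis using bP by (metis bij_is_inj inj_eq prod.inject)
    qed
    then show "\<exists>!a. LL m a = y" using ex by blast
  qed
qed

lemma r_good1:
  assumes r: "spectral_radius T < 1"
  shows "good 1"
proof (rule continuation)
  fix m :: real assume m1: "m \<ge> 1" and gm: "\<forall>\<mu>>m. good \<mu>"
  obtain z where z: "z \<in> interior K" using int_ne by blast
  obtain d where d: "d > 0" "\<And>x. (norm x / d) *\<^sub>R z - x \<in> K \<and> (norm x / d) *\<^sub>R z + x \<in> K"
    using order_unit[OF z] by blast
  have bm: "bij (LL m)" using r_bij[OF r m1] .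
  define v where "v = SS m z"
  have Lv: "LL m v = z" using SS_props(1)[OF bm] by (simp add: v_def)
  define a0 where "a0 = norm v / d"
  have a0: "a0 \<ge> 0" using d by (simp add: a0_def)
  have va: "v + a0 *\<^sub>R z \<in> K" using d(2)[of v] by (simp add: a0_def add.commute)
  define \<epsilon> where "\<epsilon> = 1 / (2 * (a0 + 1))"
  have \<epsilon>: "\<epsilon> > 0" using a0 by (simp add: \<epsilon>_def)
  define B where "B = (2 * Cn + 1) / d * (2 * Cn * norm v)"
  have B: "B \<ge> 0" using d Cn(1) by (simp add: B_def)
  have "norm (SS \<mu> y) \<le> B * norm y" if \<mu>: "m < \<mu>" "\<mu> < m + \<epsilon>" for \<mu> y
  proof -
    have g: "good \<mu>" using gm \<mu> by blast
    have b: "bij (LL \<mu>)" and p: "\<And>y. y \<in> K \<Longrightarrow> SS \<mu> y \<in> K" using g by (auto simp: good_def)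
    note S = SS_props[OF b]
    define u where "u = SS \<mu> z"
    define h where "h = \<mu> - m"
    have h: "h > 0" "h * a0 \<le> 1/2"
    proof -
      show "h > 0" using \<mu> by (simp add: h_def)
      have "h < \<epsilon>" using \<mu> by (simp add: h_def)
      then have "h * a0 \<le> \<epsilon> * a0" using a0 by (intro mult_right_mono) auto
      also have "\<epsilon> * a0 \<le> 1/2" using a0 by (simp add: \<epsilon>_def divide_simps)
      finally show "h * a0 \<le> 1/2" .
    qed
    have "LL \<mu> v = z + h *\<^sub>R v" using Lv by (simp add: LL_def h_def algebra_simps)
    then have "v = SS \<mu> (z + h *\<^sub>R v)" using S(2) by metis
    then have v: "v = u + h *\<^sub>R SS \<mu> v" by (simp add: S u_def)
    have "SS \<mu> (v + a0 *\<^sub>R z) \<in> K" using p va by blast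
    then have "SS \<mu> v + a0 *\<^sub>R u \<in> K" by (simp add: S u_def)
    then have "h *\<^sub>R (SS \<mu> v + a0 *\<^sub>R u) \<in> K" using h scale_in by simp
    moreover have "h *\<^sub>R (SS \<mu> v + a0 *\<^sub>R u) = v - (1 - h * a0) *\<^sub>R u"
      by (subst (2) v) (simp add: algebra_simps)
    ultimately have k1: "v - (1 - h * a0) *\<^sub>R u \<in> K" by simp
    have uK: "u \<in> K" using p z interior_subset by (auto simp: u_def)
    have k2: "(1 - h * a0) *\<^sub>R u \<in> K" using uK h scale_in[of u "1 - h * a0"] by simp
    have "norm ((1 - h * a0) *\<^sub>R u) \<le> Cn * norm v" using Cn(2)[OF k2 k1] .
    then have "(1 - h * a0) * norm u \<le> Cn * norm v" using h by simp
    moreover have "(1/2) * norm u \<le> (1 - h * a0) * norm u" using h by (intro mult_right_mono) auto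
    ultimately have nu: "norm u \<le> 2 * Cn * norm v" by simp
    have "norm (SS \<mu> y) \<le> (2 * Cn + 1) / d * norm u * norm y"
      using good_bound[OF g z d(1) d(2)] by (simp add: u_def)
    also have "\<dots> \<le> (2 * Cn + 1) / d * (2 * Cn * norm v) * norm y"
      using nu d Cn(1) by (intro mult_right_mono mult_left_mono) auto
    finally show ?thesis by (simp add: B_def)
  qed
  then show "\<exists>\<epsilon>>0. \<exists>B\<ge>0. \<forall>\<mu>. m < \<mu> \<and> \<mu> < m + \<epsilon> \<longrightarrow> (\<forall>y. norm (SS \<mu> y) \<le> B * norm y)"
    using \<epsilon> B by blast
qed

lemma iv_good1:
  assumes z: "z \<in> interior K" and \<eta>: "\<eta> > 0"
    and iv: "\<forall>x\<in>K - {0}. T x - (x - (\<eta> * norm x) *\<^sub>R z) \<notin> K"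
  shows "good 1"
proof (rule continuation)
  fix m :: real assume m1: "m \<ge> 1" and gm: "\<forall>\<mu>>m. good \<mu>"
  obtain d where d: "d > 0" "\<And>x. (norm x / d) *\<^sub>R z - x \<in> K \<and> (norm x / d) *\<^sub>R z + x \<in> K"
    using order_unit[OF z] by blast
  define B where "B = (2 * Cn + 1) / d * (1 / \<eta>)"
  have B: "B \<ge> 0" using d Cn(1) \<eta> by (simp add: B_def)
  have "norm (SS \<mu> y) \<le> B * norm y" if \<mu>: "m < \<mu>" for \<mu> y
  proof -
    have g: "good \<mu>" using gm \<mu> by blast
    have b: "bij (LL \<mu>)" and p: "\<And>y. y \<in> K \<Longrightarrow> SS \<mu> y \<in> K" using g by (auto simp: good_def)
    define u where "u = SS \<mu> z"
    have uK: "u \<in> K" using p z interior_subset by (auto simp: u_def)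
    have Lu: "\<mu> *\<^sub>R u - T u = z" using SS_props(1)[OF b, of z] by (simp add: u_def LL_def)
    have nu: "\<eta> * norm u \<le> 1"
    proof (rule ccontr)
      assume "\<not> \<eta> * norm u \<le> 1"
      then have big: "\<eta> * norm u - 1 \<ge> 0" by simp
      then have u0: "u \<noteq> 0" by auto
      have "T u = \<mu> *\<^sub>R u - (\<mu> *\<^sub>R u - T u)" by simp
      then have Tu: "T u = \<mu> *\<^sub>R u - z" using Lu by simp
      have "T u - (u - (\<eta> * norm u) *\<^sub>R z) = (\<mu> - 1) *\<^sub>R u + (\<eta> * norm u - 1) *\<^sub>R z"
        unfolding Tu by (simp add: algebra_simps)
      moreover have "(\<mu> - 1) *\<^sub>R u + (\<eta> * norm u - 1) *\<^sub>R z \<in> K"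
      proof -
        have zK: "z \<in> K" using z interior_subset by blast
        have "\<mu> - 1 \<ge> 0" using \<mu> m1 by simp
        from add_in[OF scale_in[OF uK this] scale_in[OF zK big]] show ?thesis .
      qed
      moreover have "T u - (u - (\<eta> * norm u) *\<^sub>R z) \<notin> K" using iv uK u0 by blast
      ultimately show False by simp
    qed
    have "norm (SS \<mu> y) \<le> (2 * Cn + 1) / d * norm u * norm y"
      using good_bound[OF g z d(1) d(2)] by (simp add: u_def)
    also have "\<dots> \<le> (2 * Cn + 1) / d * (1 / \<eta>) * norm y"
    proof -
      have "norm u \<le> 1 / \<eta>" using nu \<eta> by (simp add: divide_simps mult.commute)
      moreover have "(2 * Cn + 1) / d \<ge> 0" using d Cn(1) by simp
      ultimately show ?thesis by (intro mult_right_mono mult_left_mono) auto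
    qed
    finally show ?thesis by (simp add: B_def)
  qed
  then show "\<exists>\<epsilon>>0. \<exists>B\<ge>0. \<forall>\<mu>. m < \<mu> \<and> \<mu> < m + \<epsilon> \<longrightarrow> (\<forall>y. norm (SS \<mu> y) \<le> B * norm y)"
    using B by (intro exI[of _ 1]) auto
qed

end

context posop begin

lemma v_vi:
  assumes z: "z \<in> interior K" and zt: "z - T z \<in> interior K"
  shows "\<exists>z\<in>interior K. \<exists>l. 0 < l \<and> l < 1 \<and> l *\<^sub>R z - T z \<in> K"
proof -
  obtain e where e: "e > 0" "ball (z - T z) e \<subseteq> K" using zt mem_interior by blast
  define \<epsilon> where "\<epsilon> = min (1/2) (e / (2 * (norm z + 1)))"
  have "e / (2 * (norm z + 1)) > 0" using e by (intro divide_pos_pos) (auto intro: add_nonneg_pos)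
  then have \<epsilon>: "\<epsilon> > 0" "\<epsilon> < 1" by (auto simp: \<epsilon>_def)
  have "\<epsilon> * norm z < e"
  proof -
    have "\<epsilon> * norm z \<le> (e / (2 * (norm z + 1))) * norm z" by (intro mult_right_mono) (auto simp: \<epsilon>_def)
    also have "\<dots> < e" using e by (simp add: divide_simps) (smt (verit) mult_pos_pos norm_ge_zero)
    finally show ?thesis .
  qed
  then have "(z - T z) - \<epsilon> *\<^sub>R z \<in> ball (z - T z) e" using \<epsilon> by (simp add: dist_norm)
  then have "(1 - \<epsilon>) *\<^sub>R z - T z \<in> K" using e by (auto simp: algebra_simps)
  then show ?thesis using z \<epsilon> by (intro bexI[of _ z] exI[of _ "1 - \<epsilon>"]) auto
qed

lemma vi_bound:
  assumes z: "z \<in> interior K" and l: "0 < l" "l < 1" and lz: "l *\<^sub>R z - T z \<in> K"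
  shows "\<exists>M. \<forall>k x. norm ((T^^k) x) \<le> M * l^k * norm x"
proof -
  obtain d where d: "d > 0" "\<And>x. (norm x / d) *\<^sub>R z - x \<in> K \<and> (norm x / d) *\<^sub>R z + x \<in> K"
    using order_unit[OF z] by blast
  have zK: "z \<in> K" using z interior_subset by blast
  have pw: "l^k *\<^sub>R z - (T^^k) z \<in> K" for k
  proof (induction k)
    case 0 then show ?case by (simp add: zero_in)
  next
    case (Suc k)
    have "l^k *\<^sub>R (l *\<^sub>R z - T z) + T (l^k *\<^sub>R z - (T^^k) z) \<in> K"
      using add_in[OF scale_in[OF lz, of "l^k"] Tpos[OF Suc]] l by simp
    moreover have "l^k *\<^sub>R (l *\<^sub>R z - T z) + T (l^k *\<^sub>R z - (T^^k) z) = l^Suc k *\<^sub>R z - (T^^Suc k) z"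
      by (simp add: Tdiff Tscale algebra_simps)
    ultimately show ?case by simp
  qed
  have Tkd: "(T^^k) (a - b) = (T^^k) a - (T^^k) b" "(T^^k) (a + b) = (T^^k) a + (T^^k) b"
    "(T^^k) (c *\<^sub>R a) = c *\<^sub>R (T^^k) a" for k a b c
    using Tk_lin[of k] by (simp_all add: linear_diff linear_add linear_scale)
  have "norm ((T^^k) x) \<le> ((2 * Cn + 1) / d * norm z) * l^k * norm x" for k x
  proof -
    define s where "s = norm x / d"
    have s: "s \<ge> 0" using d by (simp add: s_def)
    have "(T^^k) (s *\<^sub>R z - x) \<in> K" "(T^^k) (s *\<^sub>R z + x) \<in> K"
      using d(2)[of x] Tk_pos by (auto simp: s_def)
    then have a: "s *\<^sub>R (T^^k) z - (T^^k) x \<in> K" "s *\<^sub>R (T^^k) z + (T^^k) x \<in> K" by (auto simp: Tkd)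
    have b: "s *\<^sub>R (l^k *\<^sub>R z - (T^^k) z) \<in> K" using scale_in[OF pw s] .
    have "(s * l^k) *\<^sub>R z - (T^^k) x \<in> K" "(s * l^k) *\<^sub>R z + (T^^k) x \<in> K"
      using add_in[OF a(1) b] add_in[OF a(2) b] by (simp_all add: algebra_simps)
    from sandwich[OF this] have "norm ((T^^k) x) \<le> (2 * Cn + 1) * (s * l^k * norm z)"
      using s l by (simp add: abs_mult)
    then show ?thesis using d by (simp add: s_def field_simps)
  qed
  then show ?thesis by blast
qed

lemma bound_r:
  assumes l: "0 \<le> l" "l < 1" and bnd: "\<And>k x. norm ((T^^k) x) \<le> M * l^k * norm x"
  shows "spectral_radius T < 1"
proof -
  define q where "q = (1 + l) / 2"
  have q: "l < q" "q < 1" using l by (auto simp: q_def)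
  have sp: "cmod c \<le> q" if "c \<in> cspectrum T" for c
    using spec_out[OF bnd l(1), of c] that q by force
  show ?thesis
  proof (cases "cspectrum T = {}")
    case True then show ?thesis by (simp add: spectral_radius_def)
  next
    case False
    then have "Sup (cmod ` cspectrum T) \<le> q" using sp by (intro cSup_least) auto
    then show ?thesis using False q by (simp add: spectral_radius_def)
  qed
qed

lemma bound_vii:
  assumes l: "0 \<le> l" "l < 1" and bnd: "\<And>k x. norm ((T^^k) x) \<le> M * l^k * norm x"
  shows "(\<lambda>k. (T ^^ k) x) \<longlonglongrightarrow> 0"
proof -
  have "norm l < 1" using l by simp
  from LIMSEQ_power_zero[OF this] have lp: "(\<lambda>k. l^k) \<longlonglongrightarrow> 0" .
  have "(\<lambda>k. M * l^k * norm x) \<longlonglongrightarrow> M * 0 * norm x"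
    using tendsto_mult[OF tendsto_mult[OF tendsto_const[of M] lp] tendsto_const[of "norm x"]] by simp
  then have g: "(\<lambda>k. M * l^k * norm x) \<longlonglongrightarrow> 0" by simp
  have ev: "\<forall>\<^sub>F k in sequentially. norm ((T ^^ k) x) \<le> M * l^k * norm x"
    using bnd by simp
  show ?thesis using Lim_null_comparison[OF ev g] .
qed

lemma vii_viii:
  assumes "(\<lambda>k. (T ^^ k) x) \<longlonglongrightarrow> 0"
  shows "(INF k. norm ((T ^^ k) x)) = 0"
proof -
  have t: "(\<lambda>k. norm ((T ^^ k) x)) \<longlonglongrightarrow> 0" using tendsto_norm_zero[OF assms] .
  have bb: "bdd_below (range (\<lambda>k. norm ((T ^^ k) x)))" by (auto intro: bdd_belowI[of _ 0])
  have ge: "(INF k. norm ((T ^^ k) x)) \<ge> 0" by (rule cINF_greatest) auto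
  have "\<not> (INF k. norm ((T ^^ k) x)) > 0"
  proof
    assume pos: "(INF k. norm ((T ^^ k) x)) > 0"
    from order_tendstoD(2)[OF t pos] obtain k where "norm ((T ^^ k) x) < (INF k. norm ((T ^^ k) x))"
      by (auto simp: eventually_sequentially)
    moreover have "(INF k. norm ((T ^^ k) x)) \<le> norm ((T ^^ k) x)" using bb by (rule cINF_lower) auto
    ultimately show False by simp
  qed
  then show ?thesis using ge by simp
qed

lemma funct_zero:
  assumes f: "bounded_linear f" and fK: "\<And>x. x \<in> K \<Longrightarrow> f x = (0::real)"
  shows "f = (\<lambda>_. 0)"
proof
  fix x
  obtain z where "z \<in> interior K" using int_ne by blast
  from generating[OF this, of x] obtain a b where "a \<in> K" "b \<in> K" "x = a - b" by blast
  then show "f x = 0" using fK f by (simp add: linear_simps)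
qed

lemma viii_ii:
  assumes viii: "\<forall>x\<in>K. (INF k. norm ((T ^^ k) x)) = 0"
  shows "\<forall>f::'a \<Rightarrow> real. bounded_linear f \<and> (\<forall>x\<in>K. f x \<ge> 0) \<and> f \<noteq> (\<lambda>_. 0) \<longrightarrow>
                 \<not> (\<forall>x\<in>K. (f \<circ> T) x - f x \<ge> 0)"
proof (intro allI impI notI)
  fix f :: "'a \<Rightarrow> real"
  assume a: "bounded_linear f \<and> (\<forall>x\<in>K. f x \<ge> 0) \<and> f \<noteq> (\<lambda>_. 0)" and b: "\<forall>x\<in>K. (f \<circ> T) x - f x \<ge> 0"
  obtain F where F: "\<And>x. norm (f x) \<le> norm x * F" "F > 0" using bounded_linear.pos_bounded a by blast
  have "f x = 0" if x: "x \<in> K" for x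
  proof -
    have mono: "f x \<le> f ((T^^k) x)" for k
    proof (induction k)
      case 0 then show ?case by simp
    next
      case (Suc k)
      have "f ((T^^k) x) \<le> f (T ((T^^k) x))" using b Tk_pos[OF x, of k] by auto
      then show ?case using Suc by simp
    qed
    have eps: "f x \<le> F * \<epsilon>" if e: "\<epsilon> > 0" for \<epsilon>
    proof -
      have bb: "bdd_below (range (\<lambda>k. norm ((T ^^ k) x)))" by (auto intro: bdd_belowI[of _ 0])
      have "(INF k. norm ((T ^^ k) x)) < \<epsilon>" using viii x e by simp
      then obtain k where "norm ((T ^^ k) x) < \<epsilon>" using cINF_less_iff[OF UNIV_not_empty bb] by auto
      moreover have "f ((T^^k) x) \<le> norm ((T^^k) x) * F" using F(1)[of "(T^^k) x"] by simp
      ultimately show ?thesis using mono[of k] F(2) by (smt (verit) mult.commute mult_strict_right_mono)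
    qed
    have "f x \<le> 0"
    proof (rule ccontr)
      assume "\<not> f x \<le> 0"
      then have "f x / (2 * F) > 0" using F(2) by simp
      from eps[OF this] have "f x \<le> F * (f x / (2 * F))" .
      moreover have "F * (f x / (2 * F)) = f x / 2" using F(2) by simp
      ultimately show False using \<open>\<not> f x \<le> 0\<close> by linarith
    qed
    then show ?thesis using a x by force
  qed
  then have "f = (\<lambda>_. 0)" using funct_zero a by blast
  then show False using a by blast
qed

end

context posop begin

lemma ii_v:
  assumes ii: "\<forall>f::'a \<Rightarrow> real. bounded_linear f \<and> (\<forall>x\<in>K. f x \<ge> 0) \<and> f \<noteq> (\<lambda>_. 0) \<longrightarrow>
                 \<not> (\<forall>x\<in>K. (f \<circ> T) x - f x \<ge> 0)"
  shows "\<exists>z\<in>interior K. z - T z \<in> interior K"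
proof (rule ccontr)
  assume nv: "\<not> (\<exists>z\<in>interior K. z - T z \<in> interior K)"
  obtain z0 where z0: "z0 \<in> interior K" using int_ne by blast
  have z0K: "z0 \<in> K" using z0 interior_subset by blast
  obtain d where d: "d > 0" "\<And>x. (norm x / d) *\<^sub>R z0 - x \<in> K \<and> (norm x / d) *\<^sub>R z0 + x \<in> K"
    using order_unit[OF z0] by blast
  define W where "W = {b - T b - k | b k. b \<in> K \<and> k \<in> K}"
  have T0: "T 0 = 0" using Tlin by (simp add: linear_0)
  have W0: "- k \<in> W" if "k \<in> K" for k
  proof -
    have "- k = 0 - T 0 - k" by (simp add: T0)
    then show ?thesis unfolding W_def using zero_in that by blast
  qed
  have W1: "\<And>b. b \<in> K \<Longrightarrow> b - T b \<in> W" unfolding W_def using zero_in by force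
  have Wadd: "\<And>u v. u \<in> W \<Longrightarrow> v \<in> W \<Longrightarrow> u + v \<in> W"
  proof -
    fix u v assume "u \<in> W" "v \<in> W"
    then obtain b k b' k' where bk: "b \<in> K" "k \<in> K" "b' \<in> K" "k' \<in> K" and uv: "u = b - T b - k" "v = b' - T b' - k'"
      unfolding W_def by blast
    have "u + v = (b + b') - T (b + b') - (k + k')" unfolding uv by (simp add: Tadd algebra_simps)
    moreover have "b + b' \<in> K" "k + k' \<in> K" using bk add_in by auto
    ultimately show "u + v \<in> W" unfolding W_def by blast
  qed
  have Wsc: "\<And>u t. u \<in> W \<Longrightarrow> t \<ge> 0 \<Longrightarrow> t *\<^sub>R u \<in> W"
  proof -
    fix u and t :: real assume "u \<in> W" "t \<ge> 0"
    then obtain b k where bk: "b \<in> K" "k \<in> K" and uv: "u = b - T b - k" unfolding W_def by blast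
    have "t *\<^sub>R u = (t *\<^sub>R b) - T (t *\<^sub>R b) - (t *\<^sub>R k)" unfolding uv by (simp add: Tscale algebra_simps)
    moreover have "t *\<^sub>R b \<in> K" "t *\<^sub>R k \<in> K" using bk scale_in \<open>t \<ge> 0\<close> by auto
    ultimately show "t *\<^sub>R u \<in> W" unfolding W_def by blast
  qed
  have Wint: "w \<notin> interior K" if "w \<in> W" for w
  proof
    assume wi: "w \<in> interior K"
    obtain b k where bk: "b \<in> K" "k \<in> K" "w = b - T b - k" using \<open>w \<in> W\<close> unfolding W_def by blast
    have bi: "b - T b \<in> interior K" using interior_add[OF wi bk(2)] bk by simp
    obtain e where e: "e > 0" "ball (b - T b) e \<subseteq> interior K"
      using bi open_interior open_contains_ball by blast
    define \<epsilon> where "\<epsilon> = e / (2 * (norm (z0 - T z0) + 1))"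
    have pz: "2 * (norm (z0 - T z0) + 1) > 0" by (simp add: add_nonneg_pos)
    have \<epsilon>: "\<epsilon> > 0" unfolding \<epsilon>_def by (intro divide_pos_pos e(1) pz)
    have "\<epsilon> * norm (z0 - T z0) < e"
    proof -
      have "\<epsilon> * norm (z0 - T z0) = e * (norm (z0 - T z0) / (2 * (norm (z0 - T z0) + 1)))"
        by (simp add: \<epsilon>_def)
      also have "\<dots> < e * 1" using e pz by (intro mult_strict_left_mono) (auto simp: divide_simps)
      finally show ?thesis by simp
    qed
    define b' where "b' = \<epsilon> *\<^sub>R z0 + b"
    have b'i: "b' \<in> interior K" unfolding b'_def by (rule interior_add[OF interior_scale[OF z0 \<epsilon>] bk(1)])
    have "b' - T b' = (b - T b) + \<epsilon> *\<^sub>R (z0 - T z0)" by (simp add: b'_def Tadd Tscale algebra_simps)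
    moreover have "(b - T b) + \<epsilon> *\<^sub>R (z0 - T z0) \<in> ball (b - T b) e"
      using \<open>\<epsilon> * norm (z0 - T z0) < e\<close> \<epsilon> by (simp add: dist_norm)
    ultimately have "b' - T b' \<in> interior K" using e by auto
    then show False using nv b'i by blast
  qed
  define S where "S x = {s. x - s *\<^sub>R z0 \<in> W}" for x
  define p where "p x = Inf (S x)" for x
  have Sin: "norm x / d \<in> S x" for x
    using W0[OF conjunct1[OF d(2)[of x]]] by (simp add: S_def)
  have Slow: "s \<ge> - (norm x / d)" if "s \<in> S x" for s x
  proof (rule ccontr)
    assume "\<not> s \<ge> - (norm x / d)"
    then have pos: "- s - norm x / d > 0" by simp
    have eq: "x - s *\<^sub>R z0 = (- s - norm x / d) *\<^sub>R z0 + ((norm x / d) *\<^sub>R z0 + x)"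
      by (simp add: algebra_simps)
    have "x - s *\<^sub>R z0 \<in> interior K"
      unfolding eq by (rule interior_add[OF interior_scale[OF z0 pos] conjunct2[OF d(2)[of x]]])
    moreover have "x - s *\<^sub>R z0 \<in> W" using that by (simp add: S_def)
    ultimately show False using Wint by blast
  qed
  have Sbdd: "bdd_below (S x)" for x using Slow by (auto simp: bdd_below_def)
  have Sne: "S x \<noteq> {}" for x using Sin by blast
  have p_le: "p x \<le> s" if "s \<in> S x" for x s unfolding p_def using that Sbdd by (rule cInf_lower)
  have p_ge: "c \<le> p x" if "\<And>s. s \<in> S x \<Longrightarrow> c \<le> s" for x c unfolding p_def using Sne that by (rule cInf_greatest)
  have sub: "p (x + y) \<le> p x + p y" for x y
  proof -
    have "p (x + y) - t \<le> p x" if t: "t \<in> S y" for t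
    proof (rule p_ge)
      fix s assume s: "s \<in> S x"
      have "(x + y) - (s + t) *\<^sub>R z0 \<in> W" using Wadd[of "x - s *\<^sub>R z0" "y - t *\<^sub>R z0"] s t
        by (simp add: S_def algebra_simps)
      then have "p (x + y) \<le> s + t" by (intro p_le) (simp add: S_def)
      then show "p (x + y) - t \<le> s" by simp
    qed
    then have "p (x + y) - p x \<le> t" if "t \<in> S y" for t using that by force
    then have "p (x + y) - p x \<le> p y" by (intro p_ge)
    then show ?thesis by simp
  qed
  have hom: "p (t *\<^sub>R x) = t * p x" if t: "t > 0" for x t
  proof (rule antisym)
    have "p (t *\<^sub>R x) / t \<le> s" if s: "s \<in> S x" for s
    proof -
      have "t *\<^sub>R x - (t * s) *\<^sub>R z0 \<in> W" using Wsc[of "x - s *\<^sub>R z0" t] s t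
        by (simp add: S_def algebra_simps)
      then have "p (t *\<^sub>R x) \<le> t * s" by (intro p_le) (simp add: S_def)
      then show ?thesis using t by (simp add: divide_simps mult.commute)
    qed
    then have "p (t *\<^sub>R x) / t \<le> p x" by (intro p_ge)
    then show "p (t *\<^sub>R x) \<le> t * p x" using t by (simp add: divide_simps mult.commute)
  next
    have "t * p x \<le> s" if s: "s \<in> S (t *\<^sub>R x)" for s
    proof -
      have "x - (s / t) *\<^sub>R z0 \<in> W" using Wsc[of "t *\<^sub>R x - s *\<^sub>R z0" "1/t"] s t
        by (simp add: S_def algebra_simps)
      then have "p x \<le> s / t" by (intro p_le) (simp add: S_def)
      then show ?thesis using t by (simp add: divide_simps mult.commute)
    qed
    then show "t * p x \<le> p (t *\<^sub>R x)" by (intro p_ge)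
  qed
  have line: "t \<le> p (t *\<^sub>R z0)" for t
  proof (rule p_ge)
    fix s assume s: "s \<in> S (t *\<^sub>R z0)"
    show "t \<le> s"
    proof (rule ccontr)
      assume "\<not> t \<le> s"
      then have "t - s > 0" by simp
      from interior_scale[OF z0 this] have "(t - s) *\<^sub>R z0 \<in> interior K" .
      moreover have "(t - s) *\<^sub>R z0 \<in> W" using s by (simp add: S_def algebra_simps)
      ultimately show False using Wint by blast
    qed
  qed
  obtain f where f: "linear f" "\<And>x. f x \<le> p x" "f z0 = 1" using hahn_banach[of p z0] sub hom line by blast
  have fW: "f w \<le> 0" if "w \<in> W" for w
  proof -
    have "0 \<in> S w" using that by (simp add: S_def)
    then show ?thesis using f(2)[of w] p_le by force
  qed
  have fb: "\<bar>f x\<bar> \<le> norm x / d" for x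
  proof -
    have "f x \<le> norm x / d" using f(2)[of x] p_le[OF Sin[of x]] by simp
    moreover have "f (- x) \<le> norm x / d" using f(2)[of "-x"] p_le[OF Sin[of "-x"]] by simp
    moreover have "f (- x) = - f x" using f(1) by (simp add: linear_neg)
    ultimately show ?thesis by simp
  qed
  have bl: "bounded_linear f"
  proof (rule bounded_linear_intro[of f "1 / d"])
    show "f (x + y) = f x + f y" for x y using f(1) by (simp add: linear_add)
    show "f (r *\<^sub>R x) = r *\<^sub>R f x" for r x using f(1) by (simp add: linear_scale)
    show "norm (f x) \<le> norm x * (1 / d)" for x using fb[of x] by simp
  qed
  have fpos: "\<forall>x\<in>K. f x \<ge> 0"
  proof
    fix x assume "x \<in> K"
    then have "f (- x) \<le> 0" using fW W0 by blast
    then show "f x \<ge> 0" using f(1) by (simp add: linear_neg)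
  qed
  have fne: "f \<noteq> (\<lambda>_. 0)" using f(3) by auto
  have "\<forall>x\<in>K. (f \<circ> T) x - f x \<ge> 0"
  proof
    fix x assume "x \<in> K"
    then have "f (x - T x) \<le> 0" using fW W1 by blast
    then show "(f \<circ> T) x - f x \<ge> 0" using f(1) by (simp add: linear_diff)
  qed
  then show False using ii bl fpos fne by blast
qed

end

context posop begin

lemma vi_iii:
  assumes z: "z \<in> interior K" and l: "0 < l" "l < 1" and lz: "l *\<^sub>R z - T z \<in> K"
    and z': "z' \<in> interior K"
  shows "\<exists>\<eta>>0. \<forall>x\<in>K - {0}. T x - (x - (\<eta> * norm x) *\<^sub>R z') \<notin> K"
proof -
  obtain d where d: "d > 0" "\<And>x. (norm x / d) *\<^sub>R z - x \<in> K \<and> (norm x / d) *\<^sub>R z + x \<in> K"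
    using order_unit[OF z] by blast
  have zK: "z \<in> K" using z interior_subset by blast
  define \<gamma> where "\<gamma> = norm z' / d + 1"
  have \<gamma>: "\<gamma> > 0" using d by (simp add: \<gamma>_def add_nonneg_pos)
  have hz': "\<gamma> *\<^sub>R z - z' \<in> K"
  proof -
    have "((norm z' / d) *\<^sub>R z - z') + z \<in> K" using d(2)[of z'] zK by (intro add_in) auto
    then show ?thesis by (simp add: \<gamma>_def algebra_simps)
  qed
  define \<eta> where "\<eta> = (1 - l) / (4 * Cn * \<gamma> * (norm z + 1))"
  have \<eta>: "\<eta> > 0" using l Cn(1) \<gamma> by (simp add: \<eta>_def add_nonneg_pos)
  have tpos: "d * \<eta> * \<gamma> / (1 - l) > 0" using d \<eta> \<gamma> l by simp
  obtain n where n: "l^n < d * \<eta> * \<gamma> / (1 - l)" using real_arch_pow_inv[OF tpos l(2)] by blast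
  have "T x - (x - (\<eta> * norm x) *\<^sub>R z') \<notin> K" if x: "x \<in> K" "x \<noteq> 0" for x
  proof
    assume A: "T x - (x - (\<eta> * norm x) *\<^sub>R z') \<in> K"
    define e where "e = \<eta> * norm x * \<gamma>"
    have e: "e \<ge> 0" using \<eta> \<gamma> by (simp add: e_def)
    have "(T x - (x - (\<eta> * norm x) *\<^sub>R z')) + (\<eta> * norm x) *\<^sub>R (\<gamma> *\<^sub>R z - z') \<in> K"
      using add_in[OF A scale_in[OF hz', of "\<eta> * norm x"]] \<eta> by simp
    then have B: "T x - x + e *\<^sub>R z \<in> K" by (simp add: e_def algebra_simps)
    define s0 where "s0 = norm x / d"
    have s0: "s0 \<ge> 0" using d by (simp add: s0_def)
    have ind: "(l^k * s0 + e / (1 - l)) *\<^sub>R z - x \<in> K" for k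
    proof (induction k)
      case 0
      have "(s0 *\<^sub>R z - x) + (e / (1 - l)) *\<^sub>R z \<in> K"
        using add_in[OF conjunct1[OF d(2)[of x]] scale_in[OF zK, of "e / (1 - l)"]] e l by (simp add: s0_def)
      then show ?case by (simp add: algebra_simps)
    next
      case (Suc k)
      define s where "s = l^k * s0 + e / (1 - l)"
      have s: "s \<ge> 0" using l s0 e by (simp add: s_def)
      have "s *\<^sub>R z - x \<in> K" using Suc by (simp add: s_def)
      from add_in[OF add_in[OF Tpos[OF this] scale_in[OF lz s]] B]
      have "T (s *\<^sub>R z - x) + s *\<^sub>R (l *\<^sub>R z - T z) + (T x - x + e *\<^sub>R z) \<in> K" .
      moreover have "T (s *\<^sub>R z - x) + s *\<^sub>R (l *\<^sub>R z - T z) + (T x - x + e *\<^sub>R z) = (s * l + e) *\<^sub>R z - x"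
        by (simp add: Tdiff Tscale algebra_simps)
      moreover have "s * l + e = l^Suc k * s0 + e / (1 - l)"
        using l by (simp add: s_def field_simps)
      ultimately show ?case by simp
    qed
    define E where "E = e / (1 - l)"
    have "l^n * s0 \<le> E"
    proof -
      have "l^n * s0 \<le> (d * \<eta> * \<gamma> / (1 - l)) * s0" using n s0 by (intro mult_right_mono) auto
      also have "\<dots> = E" using d by (simp add: s0_def e_def E_def)
      finally show ?thesis .
    qed
    then have c: "2 * E - (l^n * s0 + E) \<ge> 0" by linarith
    have "((l^n * s0 + E) *\<^sub>R z - x) + (2 * E - (l^n * s0 + E)) *\<^sub>R z \<in> K"
      using add_in[OF ind[of n] scale_in[OF zK c]] by (simp add: E_def)
    moreover have "((l^n * s0 + E) *\<^sub>R z - x) + (2 * E - (l^n * s0 + E)) *\<^sub>R z = (2 * E) *\<^sub>R z - x"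
      by (simp add: algebra_simps scaleR_2 flip: scaleR_add_left)
    ultimately have "(2 * E) *\<^sub>R z - x \<in> K" by metis
    from Cn(2)[OF x(1) this] have "norm x \<le> Cn * (2 * E * norm z)"
      using e l by (simp add: E_def)
    also have "E = norm x / (4 * Cn * (norm z + 1))"
    proof -
      have nz: "norm z + 1 > 0" by (simp add: add_nonneg_pos)
      have "E = ((1 - l) / (4 * Cn * \<gamma> * (norm z + 1))) * norm x * \<gamma> / (1 - l)"
        by (simp add: E_def e_def \<eta>_def)
      also have "\<dots> = norm x / (4 * Cn * (norm z + 1))"
        using l Cn(1) \<gamma> nz by (simp add: divide_simps)
      finally show ?thesis .
    qed
    also have "Cn * (2 * (norm x / (4 * Cn * (norm z + 1))) * norm z) = norm x * (norm z / (2 * (norm z + 1)))"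
      using Cn(1) by (simp add: divide_simps)
    also have "\<dots> < norm x * 1"
    proof (rule mult_strict_left_mono)
      have "norm z + 1 > 0" by (simp add: add_nonneg_pos)
      then show "norm z / (2 * (norm z + 1)) < 1" by (simp add: divide_simps)
      show "norm x > 0" using x by simp
    qed
    finally show False by simp
  qed
  then show ?thesis using \<eta> by blast
qed

end

theorem theorem3p11:
  fixes K :: "'a::banach set" and T :: "'a \<Rightarrow> 'a"
  assumes cone: "ordered_cone K"
    and normal: "normal_cone K"
    and int_ne: "interior K \<noteq> {}"
    and lin: "bounded_linear T"
    and pos: "T ` K \<subseteq> K"
  shows "(spectral_radius T < 1 \<longleftrightarrow>
            (\<forall>f::'a \<Rightarrow> real. bounded_linear f \<and> (\<forall>x\<in>K. f x \<ge> 0) \<and> f \<noteq> (\<lambda>_. 0) \<longrightarrow>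
                 \<not> (\<forall>x\<in>K. (f \<circ> T) x - f x \<ge> 0)))
       \<and> (spectral_radius T < 1 \<longleftrightarrow>
            (\<forall>z\<in>interior K. \<exists>\<eta>>0. \<forall>x\<in>K - {0}. T x - (x - (\<eta> * norm x) *\<^sub>R z) \<notin> K))
       \<and> (spectral_radius T < 1 \<longleftrightarrow>
            (\<exists>z\<in>interior K. \<exists>\<eta>>0. \<forall>x\<in>K - {0}. T x - (x - (\<eta> * norm x) *\<^sub>R z) \<notin> K))
       \<and> (spectral_radius T < 1 \<longleftrightarrow> (\<exists>z\<in>interior K. z - T z \<in> interior K))
       \<and> (spectral_radius T < 1 \<longleftrightarrow>
            (\<exists>z\<in>interior K. \<exists>l. 0 < l \<and> l < 1 \<and> l *\<^sub>R z - T z \<in> K))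
       \<and> (spectral_radius T < 1 \<longleftrightarrow> (\<forall>x. (\<lambda>k. (T ^^ k) x) \<longlonglongrightarrow> 0))
       \<and> (spectral_radius T < 1 \<longleftrightarrow> (\<forall>x\<in>K. (INF k. norm ((T ^^ k) x)) = 0))"
proof -
  interpret P: posop K T
    by (rule posop.intro, rule ocone.intro, rule cone, rule normal, rule posop_axioms.intro, rule lin, rule pos, rule int_ne)
  define R where "R = (spectral_radius T < 1)"
  define V where "V = (\<exists>z\<in>interior K. z - T z \<in> interior K)"
  define VI where "VI = (\<exists>z\<in>interior K. \<exists>l. 0 < l \<and> l < 1 \<and> l *\<^sub>R z - T z \<in> K)"
  define II where "II = (\<forall>f::'a \<Rightarrow> real. bounded_linear f \<and> (\<forall>x\<in>K. f x \<ge> 0) \<and> f \<noteq> (\<lambda>_. 0) \<longrightarrow>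
                 \<not> (\<forall>x\<in>K. (f \<circ> T) x - f x \<ge> 0))"
  define III where "III = (\<forall>z\<in>interior K. \<exists>\<eta>>0. \<forall>x\<in>K - {0}. T x - (x - (\<eta> * norm x) *\<^sub>R z) \<notin> K)"
  define IV where "IV = (\<exists>z\<in>interior K. \<exists>\<eta>>0. \<forall>x\<in>K - {0}. T x - (x - (\<eta> * norm x) *\<^sub>R z) \<notin> K)"
  define VII where "VII = (\<forall>x. (\<lambda>k. (T ^^ k) x) \<longlonglongrightarrow> 0)"
  define VIII where "VIII = (\<forall>x\<in>K. (INF k. norm ((T ^^ k) x)) = 0)"
  have R_V: "R \<Longrightarrow> V"
  proof -
    assume "R"
    then have "spectral_radius T < 1" unfolding R_def .
    from P.good1_imp_v[OF P.r_good1[OF this]] show V unfolding V_def .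
  qed
  have V_VI: "V \<Longrightarrow> VI"
  proof -
    assume "V"
    then obtain z where "z \<in> interior K" "z - T z \<in> interior K" unfolding V_def by blast
    from P.v_vi[OF this] show VI unfolding VI_def .
  qed
  have VI_B: "VI \<Longrightarrow> \<exists>M l. 0 \<le> l \<and> l < 1 \<and> (\<forall>k x. norm ((T^^k) x) \<le> M * l^k * norm x)"
  proof -
    assume VI
    then obtain z l where zl: "z \<in> interior K" "0 < l" "l < 1" "l *\<^sub>R z - T z \<in> K" unfolding VI_def by blast
    from P.vi_bound[OF zl] obtain M where "\<forall>k x. norm ((T^^k) x) \<le> M * l^k * norm x" by blast
    then show ?thesis using zl by (intro exI[of _ M] exI[of _ l]) simp
  qed
  have B_R: "VI \<Longrightarrow> R"
  proof -
    assume VI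
    then obtain M l where Ml: "0 \<le> l" "l < 1" "\<And>k x. norm ((T^^k) x) \<le> M * l^k * norm x" using VI_B by blast
    from P.bound_r[OF Ml] show R unfolding R_def .
  qed
  have B_VII: "VI \<Longrightarrow> VII"
  proof -
    assume VI
    then obtain M l where Ml: "0 \<le> l" "l < 1" "\<And>k x. norm ((T^^k) x) \<le> M * l^k * norm x" using VI_B by blast
    show VII unfolding VII_def using P.bound_vii[OF Ml] by blast
  qed
  have VII_VIII: "VII \<Longrightarrow> VIII"
  proof -
    assume VII
    then have a: "(\<lambda>k. (T ^^ k) x) \<longlonglongrightarrow> 0" for x unfolding VII_def by blast
    show VIII unfolding VIII_def using P.vii_viii[OF a] by blast
  qed
  have VIII_II: "VIII \<Longrightarrow> II"
  proof -
    assume VIII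
    from P.viii_ii[OF this[unfolded VIII_def]] show II unfolding II_def .
  qed
  have II_V: "II \<Longrightarrow> V"
  proof -
    assume II
    from P.ii_v[OF this[unfolded II_def]] show V unfolding V_def .
  qed
  have VI_III: "VI \<Longrightarrow> III"
  proof -
    assume VI
    then obtain z l where zl: "z \<in> interior K" "0 < l" "l < 1" "l *\<^sub>R z - T z \<in> K" unfolding VI_def by blast
    have "\<exists>\<eta>>0. \<forall>x\<in>K - {0}. T x - (x - (\<eta> * norm x) *\<^sub>R z') \<notin> K" if "z' \<in> interior K" for z'
      using P.vi_iii[OF zl that] .
    then show III unfolding III_def by blast
  qed
  have III_IV: "III \<Longrightarrow> IV"
  proof -
    assume "III"
    then have a: "\<forall>z\<in>interior K. \<exists>\<eta>>0. \<forall>x\<in>K - {0}. T x - (x - (\<eta> * norm x) *\<^sub>R z) \<notin> K"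
      unfolding III_def .
    obtain z where z: "z \<in> interior K" using int_ne by blast
    from bspec[OF a z] obtain \<eta> where "\<eta> > 0" "\<forall>x\<in>K - {0}. T x - (x - (\<eta> * norm x) *\<^sub>R z) \<notin> K" by blast
    then show IV unfolding IV_def using z by blast
  qed
  have IV_V: "IV \<Longrightarrow> V"
  proof -
    assume IV
    then obtain z \<eta> where z: "z \<in> interior K" "\<eta> > 0" "\<forall>x\<in>K - {0}. T x - (x - (\<eta> * norm x) *\<^sub>R z) \<notin> K"
      unfolding IV_def by blast
    from P.good1_imp_v[OF P.iv_good1[OF z]] show V unfolding V_def .
  qed
  have all: "(R = II) \<and> (R = III) \<and> (R = IV) \<and> (R = V) \<and> (R = VI) \<and> (R = VII) \<and> (R = VIII)"
    using R_V V_VI B_R B_VII VII_VIII VIII_II II_V VI_III III_IV IV_V by argo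
  from all show ?thesis unfolding R_def II_def III_def IV_def V_def VI_def VII_def VIII_def .
qed

end
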